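(* Let $w$ be a weight on $\mathbb{R}^n$, let $\varphi$ be as in the context, and let $1\le q<p<\infty$. Then $A(\mathcal M^{q}(\varphi))\subset A(\mathcal M^{p}(\varphi))$; that is, if $[w]_{A(\mathcal M^{q}(\varphi))}<\infty$ then $[w]_{A(\mathcal M^{p}(\varphi))}<\infty$.
   Context: A weight is a nonnegative locally integrable function on $\mathbb{R}^n$. Let $\varphi$ be a function from the set of Euclidean balls of $\mathbb{R}^n$ to $(0,\infty)$; standing assumptions: $\varphi$ is doubling ($\varphi(2B)\le C\varphi(B)$ for all balls $B$) and reverse doubling (there are $\delta>0$, $C>0$ with $\varphi(B_1)/\varphi(B_2)\le C(|B_1|/|B_2|)^\delta$ whenever $B_1\subset B_2$ are balls), and characteristic functions of balls belong to the Morrey spaces considered. For $1\le p<\infty$, $\mathcal M^{p}(\varphi,w)$ is the space of measurable $f$ with $\|f\|_{\mathcal M^{p}(\varphi,w)}:=\sup_B\big(\varphi(B)^{-1}\int_B|f|^pw\big)^{1/p}<\infty$, the supremum over all balls. For a Banach lattice $X$ of measurable functions, its Köthe dual $X'$ consists of measurable $g$ with $\|g\|_{X'}:=\sup\{\int_{\mathbb{R}^n}|fg|: \|f\|_X\le 1\}<\infty$. Define $[w]_{A(\mathcal M^{p}(\varphi))}:=\sup_B \|\chi_B\|_{\mathcal M^{p}(\varphi,w)}\|\chi_B\|_{\mathcal M^{p}(\varphi,w)'}/|B|$ (supremum over all balls $B$), and $A(\mathcal M^{p}(\varphi))$ is the class of weights with this quantity finite. *)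

theory Defs
  imports "HOL-Analysis.Analysis"
begin

definition balls :: "'a::euclidean_space set set" where
  "balls = {ball x r | x r. r > 0}"

definition is_weight :: "('a::euclidean_space \<Rightarrow> real) \<Rightarrow> bool" where
  "is_weight w \<longleftrightarrow> w \<in> borel_measurable lebesgue \<and> (\<forall>x. 0 \<le> w x) \<and>
     (\<forall>K. compact K \<longrightarrow> set_integrable lebesgue K w)"

definition admissible_phi :: "('a::euclidean_space set \<Rightarrow> real) \<Rightarrow> bool" where
  "admissible_phi \<phi> \<longleftrightarrow>
     (\<forall>B\<in>balls. 0 < \<phi> B) \<and>
     (\<exists>C. \<forall>x r. 0 < r \<longrightarrow> \<phi> (ball x (2 * r)) \<le> C * \<phi> (ball x r)) \<and>
     (\<exists>\<delta> C. 0 < \<delta> \<and> 0 < C \<and> (\<forall>B1\<in>balls. \<forall>B2\<in>balls. B1 \<subseteq> B2 \<longrightarrow>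
        \<phi> B1 / \<phi> B2 \<le> C * (measure lborel B1 / measure lborel B2) powr \<delta>))"

definition enn_root :: "real \<Rightarrow> ennreal \<Rightarrow> ennreal" where
  "enn_root p t = (if t = \<infinity> then \<infinity> else ennreal (enn2real t powr (1 / p)))"

definition morrey_norm :: "real \<Rightarrow> ('a::euclidean_space set \<Rightarrow> real) \<Rightarrow> ('a \<Rightarrow> real) \<Rightarrow> ('a \<Rightarrow> real) \<Rightarrow> ennreal" where
  "morrey_norm p \<phi> w f = enn_root p
     (SUP B\<in>balls. (\<integral>\<^sup>+x\<in>B. ennreal (\<bar>f x\<bar> powr p * w x) \<partial>lebesgue) / ennreal (\<phi> B))"

definition kothe_norm :: "(('a::euclidean_space \<Rightarrow> real) \<Rightarrow> ennreal) \<Rightarrow> ('a \<Rightarrow> real) \<Rightarrow> ennreal" where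
  "kothe_norm X g = (SUP f\<in>{f \<in> borel_measurable lebesgue. X f \<le> 1}.
      \<integral>\<^sup>+x. ennreal \<bar>f x * g x\<bar> \<partial>lebesgue)"

definition A_const :: "real \<Rightarrow> ('a::euclidean_space set \<Rightarrow> real) \<Rightarrow> ('a \<Rightarrow> real) \<Rightarrow> ennreal" where
  "A_const p \<phi> w = (SUP B\<in>balls.
      morrey_norm p \<phi> w (indicator B) * kothe_norm (morrey_norm p \<phi> w) (indicator B)
        / emeasure lborel B)"

end

theory Submission imports Defs begin

lemma young_pt:
  fixes r c t :: real
  assumes r: "0 < r" "r < 1" and c: "0 < c" and t: "0 \<le> t"
  shows "t \<le> r / c * t powr (1/r) + (1 - r) * c powr (r/(1-r))"
proof (cases "t = 0")
  case True
  then show ?thesis using r c by simp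
next
  case False
  then have tp: "0 < t" using t by simp
  have "(t powr (1/r) / c) powr r * (c powr (r/(1-r))) powr (1-r)
      \<le> r * (t powr (1/r) / c) + (1-r) * c powr (r/(1-r))"
    by (rule Youngs_inequality_0) (use r c tp in auto)
  moreover have "(t powr (1/r) / c) powr r = t / c powr r"
    using r c tp by (simp add: powr_divide powr_powr)
  moreover have "(c powr (r/(1-r))) powr (1-r) = c powr r"
    using r c by (simp add: powr_powr)
  ultimately show ?thesis using c by simp
qed

lemma alg1:
  fixes r k m :: real
  assumes r: "0 < r" "r < 1" and k: "0 < k" and m: "0 < m"
  defines "c \<equiv> (k/m) powr (1-r)"
  shows "r / c * k + (1 - r) * c powr (r/(1-r)) * m = k powr r * m powr (1-r)"
proof -
  have c1: "c powr (r/(1-r)) = k powr r / m powr r"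
    using r k m by (simp add: c_def powr_powr powr_divide)
  have c2: "r / c * k = r * (k powr r * m powr (1-r))"
  proof -
    have "c = k powr (1-r) / m powr (1-r)" using k m by (simp add: c_def powr_divide)
    moreover have "k = k powr r * k powr (1-r)" using k by (simp flip: powr_add)
    have kk: "k / k powr (1-r) = k powr r"
    proof -
      have "k powr r = k powr (1 - (1-r))" by simp
      also have "\<dots> = k powr 1 / k powr (1-r)" by (rule powr_diff)
      finally show ?thesis using k by simp
    qed
    have "r / c * k = r * (k / k powr (1-r)) * m powr (1-r)"
      using \<open>c = _\<close> k m by simp
    then show ?thesis using kk by simp
  qed
  have c3: "k powr r / m powr r * m = k powr r * m powr (1-r)"
  proof -
    have "m = m powr r * m powr (1-r)" using m by (simp flip: powr_add)
    then show ?thesis using m by (simp add: field_simps)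
  qed
  have "r / c * k + (1 - r) * c powr (r/(1-r)) * m
      = r * (k powr r * m powr (1-r)) + (1 - r) * (k powr r / m powr r * m)"
    by (simp only: c1 c2 mult.assoc)
  also have "\<dots> = r * (k powr r * m powr (1-r)) + (1 - r) * (k powr r * m powr (1-r))"
    by (simp only: c3)
  also have "\<dots> = k powr r * m powr (1-r)" by (simp add: algebra_simps)
  finally show ?thesis .
qed

lemma alg2:
  fixes r k m s p q :: real
  assumes r: "r = q/p" "0 < q" "q < p" and k: "0 \<le> k" and m: "0 < m" and s: "0 \<le> s"
  shows "s powr (1/p) * (k powr r * m powr (1-r)) / m = (s powr (1/q) * k / m) powr r"
proof -
  have "(s powr (1/q) * k / m) powr r = s powr (1/p) * k powr r / m powr r"
    using r k m s by (simp add: powr_mult powr_divide powr_powr)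
  moreover have "m powr (1-r) / m = 1 / m powr r"
    using m by (simp add: powr_diff)
  moreover have "s powr (1/p) * (k powr r * m powr (1-r)) / m = s powr (1/p) * k powr r * (m powr (1-r) / m)"
    by simp
  ultimately show ?thesis by simp
qed

lemma enn_root_le_1:
  assumes "0 < p" shows "enn_root p t \<le> 1 \<longleftrightarrow> t \<le> 1"
proof (cases "t = \<infinity>")
  case True then show ?thesis by (simp add: enn_root_def)
next
  case False
  then obtain x where x: "t = ennreal x" "0 \<le> x" by (cases t) auto
  have "x powr (1/p) \<le> 1 \<longleftrightarrow> x \<le> 1"
  proof
    assume "x powr (1/p) \<le> 1" then show "x \<le> 1"
      using gr_one_powr[of x "1/p"] assms by (meson divide_pos_pos not_le zero_less_one)
  next
    assume "x \<le> 1" then show "x powr (1/p) \<le> 1" using x assms by (simp add: powr_le1)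
  qed
  then show ?thesis using x by (simp add: enn_root_def ennreal_le_1)
qed

lemma ind_powr: "0 < p \<Longrightarrow> \<bar>indicator B x :: real\<bar> powr p = indicator B x"
  by (simp split: split_indicator)

lemma morrey_ind:
  assumes "0 < p"
  shows "morrey_norm p \<phi> w (indicator B) = enn_root p
     (SUP B'\<in>balls. (\<integral>\<^sup>+x\<in>B'. ennreal (indicator B x * w x) \<partial>lebesgue) / ennreal (\<phi> B'))"
proof -
  have "\<And>x. indicator B x powr p = (indicator B x :: real)" using assms by (simp split: split_indicator)
  then show ?thesis unfolding morrey_norm_def by simp
qed

lemma morrey_mono:
  assumes "\<forall>x. 0 \<le> w x" "\<And>x. \<bar>g x\<bar> powr q \<le> \<bar>f x\<bar> powr p"
  shows "(SUP B\<in>balls. (\<integral>\<^sup>+x\<in>B. ennreal (\<bar>g x\<bar> powr q * w x) \<partial>lebesgue) / ennreal (\<phi> B))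
     \<le> (SUP B\<in>balls. (\<integral>\<^sup>+x\<in>B. ennreal (\<bar>f x\<bar> powr p * w x) \<partial>lebesgue) / ennreal (\<phi> B))"
proof (rule SUP_mono')
  fix B
  have "(\<integral>\<^sup>+x\<in>B. ennreal (\<bar>g x\<bar> powr q * w x) \<partial>lebesgue) \<le> (\<integral>\<^sup>+x\<in>B. ennreal (\<bar>f x\<bar> powr p * w x) \<partial>lebesgue)"
    using assms by (intro nn_integral_mono mult_right_mono ennreal_leI mult_right_mono) auto
  then show "(\<integral>\<^sup>+x\<in>B. ennreal (\<bar>g x\<bar> powr q * w x) \<partial>lebesgue) / ennreal (\<phi> B)
     \<le> (\<integral>\<^sup>+x\<in>B. ennreal (\<bar>f x\<bar> powr p * w x) \<partial>lebesgue) / ennreal (\<phi> B)"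
    by (rule divide_right_mono_ennreal)
qed

lemma dual_bound:
  fixes w :: "'a::euclidean_space \<Rightarrow> real"
  assumes w: "\<forall>x. 0 \<le> w x" and q: "0 < q" "q < p" and B: "B \<in> sets lebesgue"
    and mB: "emeasure lebesgue B = ennreal m" "0 < m"
    and K: "kothe_norm (morrey_norm q \<phi> w) (indicator B) = ennreal k" "0 \<le> k"
  shows "kothe_norm (morrey_norm p \<phi> w) (indicator B) \<le> ennreal (k powr (q/p) * m powr (1 - q/p))"
  unfolding kothe_norm_def[of "morrey_norm p \<phi> w"]
proof (rule SUP_least)
  fix f assume f: "f \<in> {f \<in> borel_measurable lebesgue. morrey_norm p \<phi> w f \<le> 1}"
  define r where "r = q/p"
  have r: "0 < r" "r < 1" using q by (auto simp: r_def)
  have p: "0 < p" using q by simp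
  define g where "g x = \<bar>f x\<bar> powr (1/r) * indicator B x" for x
  have fm: "f \<in> borel_measurable lebesgue" using f by simp
  have gm: "g \<in> borel_measurable lebesgue"
    unfolding g_def using fm B by measurable
  have g0: "0 \<le> g x" for x by (simp add: g_def)
  have pw: "\<bar>g x\<bar> powr q \<le> \<bar>f x\<bar> powr p" for x
  proof (cases "x \<in> B")
    case True
    then have "\<bar>g x\<bar> powr q = \<bar>f x\<bar> powr p"
      using q by (simp add: g_def powr_powr r_def)
    then show ?thesis by simp
  next
    case False
    then show ?thesis by (simp add: g_def)
  qed
  have "morrey_norm p \<phi> w f \<le> 1" using f by simp
  then have "(SUP B\<in>balls. (\<integral>\<^sup>+x\<in>B. ennreal (\<bar>f x\<bar> powr p * w x) \<partial>lebesgue) / ennreal (\<phi> B)) \<le> 1"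
    unfolding morrey_norm_def enn_root_le_1[OF p] .
  then have "(SUP B\<in>balls. (\<integral>\<^sup>+x\<in>B. ennreal (\<bar>g x\<bar> powr q * w x) \<partial>lebesgue) / ennreal (\<phi> B)) \<le> 1"
    by (rule order_trans[OF morrey_mono[OF w pw]])
  then have "morrey_norm q \<phi> w g \<le> 1"
    unfolding morrey_norm_def enn_root_le_1[OF q(1)] .
  then have "(\<integral>\<^sup>+x. ennreal \<bar>g x * indicator B x\<bar> \<partial>lebesgue) \<le> kothe_norm (morrey_norm q \<phi> w) (indicator B)"
    unfolding kothe_norm_def using gm by (intro SUP_upper) auto
  moreover have "\<bar>g x * indicator B x\<bar> = g x" for x
    by (simp add: g_def split: split_indicator)
  ultimately have hg: "(\<integral>\<^sup>+x. ennreal (g x) \<partial>lebesgue) \<le> ennreal k" using K by simp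
  show "(\<integral>\<^sup>+x. ennreal \<bar>f x * indicator B x\<bar> \<partial>lebesgue) \<le> ennreal (k powr (q/p) * m powr (1 - q/p))"
  proof (cases "k = 0")
    case True
    then have "(\<integral>\<^sup>+x. ennreal (g x) \<partial>lebesgue) = 0" using hg by simp
    then have "AE x in lebesgue. ennreal (g x) = 0"
      using gm by (subst (asm) nn_integral_0_iff_AE) auto
    then have ae0: "AE x in lebesgue. ennreal \<bar>f x * indicator B x\<bar> = 0"
      by eventually_elim (use r in \<open>auto simp: g_def split: split_indicator\<close>)
    then have "(\<integral>\<^sup>+x. ennreal \<bar>f x * indicator B x\<bar> \<partial>lebesgue) = (\<integral>\<^sup>+x. 0 \<partial>lebesgue)"
      using nn_integral_cong_AE[OF ae0] by simp
    then show ?thesis by simp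
  next
    case False
    then have kp: "0 < k" using K by simp
    define c where "c = (k/m) powr (1-r)"
    have cp: "0 < c" using kp mB by (simp add: c_def)
    define C where "C = (1 - r) * c powr (r/(1-r))"
    have Cp: "0 \<le> C" using r by (simp add: C_def)
    have "(\<integral>\<^sup>+x. ennreal \<bar>f x * indicator B x\<bar> \<partial>lebesgue)
        \<le> (\<integral>\<^sup>+x. ennreal (r/c) * ennreal (g x) + ennreal C * indicator B x \<partial>lebesgue)"
    proof (rule nn_integral_mono)
      fix x
      have "\<bar>f x * indicator B x\<bar> \<le> r/c * g x + C * indicator B x"
        using young_pt[OF r cp, of "\<bar>f x\<bar>"]
        by (simp add: g_def C_def split: split_indicator)
      then have "ennreal \<bar>f x * indicator B x\<bar> \<le> ennreal (r/c * g x + C * indicator B x)"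
        by (rule ennreal_leI)
      also have "\<dots> = ennreal (r/c * g x) + ennreal (C * indicator B x)"
        using r cp Cp g0[of x] by (intro ennreal_plus) auto
      also have "ennreal (r/c * g x) = ennreal (r/c) * ennreal (g x)"
        using r cp g0[of x] by (intro ennreal_mult) auto
      also have "ennreal (C * indicator B x) = ennreal C * indicator B x"
        by (simp split: split_indicator)
      finally show "ennreal \<bar>f x * indicator B x\<bar> \<le> ennreal (r/c) * ennreal (g x) + ennreal C * indicator B x" .
    qed
    also have "\<dots> = ennreal (r/c) * (\<integral>\<^sup>+x. ennreal (g x) \<partial>lebesgue) + ennreal C * emeasure lebesgue B"
      using gm B by (simp add: nn_integral_add nn_integral_cmult)
    also have "\<dots> \<le> ennreal (r/c) * ennreal k + ennreal C * ennreal m"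
      using hg mB by (intro add_mono mult_left_mono) auto
    also have "\<dots> = ennreal (r/c * k) + ennreal (C * m)"
    proof -
      have "ennreal (r/c) * ennreal k = ennreal (r/c * k)" using r cp K by (intro ennreal_mult[symmetric]) auto
      moreover have "ennreal C * ennreal m = ennreal (C*m)" using Cp mB by (intro ennreal_mult[symmetric]) auto
      ultimately show ?thesis by simp
    qed
    also have "\<dots> = ennreal (r/c * k + C * m)"
      using r cp Cp K mB by (intro ennreal_plus[symmetric]) auto
    also have "r/c * k + C * m = k powr r * m powr (1-r)"
      unfolding C_def c_def using alg1[OF r kp mB(2)] by (simp add: mult.assoc)
    finally show ?thesis by (simp add: r_def)
  qed
qed

theorem proposition2p3:
  fixes w :: "'a::euclidean_space \<Rightarrow> real"
    and \<phi> :: "'a set \<Rightarrow> real"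
    and p q :: real
  assumes "is_weight w"
    and "admissible_phi \<phi>"
    and "1 \<le> q" and "q < p"
    and "\<forall>B\<in>balls. morrey_norm q \<phi> w (indicator B) < \<infinity>"
    and "\<forall>B\<in>balls. morrey_norm p \<phi> w (indicator B) < \<infinity>"
    and "A_const q \<phi> w < \<infinity>"
  shows "A_const p \<phi> w < \<infinity>"
proof -
  define r where "r = q/p"
  have q0: "0 < q" and p0: "0 < p" using assms(3,4) by auto
  have r: "0 < r" "r < 1" using assms(3,4) by (auto simp: r_def)
  have w: "\<forall>x. 0 \<le> w x" using assms(1) by (simp add: is_weight_def)
  obtain a where a: "A_const q \<phi> w = ennreal a" "0 \<le> a"
    using assms(7) by (cases "A_const q \<phi> w") auto
  have "A_const p \<phi> w \<le> ennreal (a powr r)"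
    unfolding A_const_def[of p]
  proof (rule SUP_least)
    fix B :: "'a set" assume B: "B \<in> balls"
    then obtain c \<rho> where Bdef: "B = ball c \<rho>" "0 < \<rho>" by (auto simp: balls_def)
    define m where "m = measure lborel B"
    have m0: "0 < m" unfolding m_def Bdef using Bdef(2) content_ball_gt_0_iff by blast
    have mB: "emeasure lborel B = ennreal m"
      unfolding m_def Bdef using emeasure_lborel_ball_finite[of c \<rho>]
      by (intro emeasure_eq_ennreal_measure) auto
    have mBl: "emeasure lebesgue B = ennreal m"
      using mB unfolding Bdef by simp
    have Bs: "B \<in> sets lebesgue" unfolding Bdef by simp
    define S where "S = (SUP B'\<in>balls. (\<integral>\<^sup>+x\<in>B'. ennreal (indicator B x * w x) \<partial>lebesgue) / ennreal (\<phi> B'))"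
    have Nq: "morrey_norm q \<phi> w (indicator B) = enn_root q S"
      unfolding S_def by (rule morrey_ind[OF q0])
    have Np: "morrey_norm p \<phi> w (indicator B) = enn_root p S"
      unfolding S_def by (rule morrey_ind[OF p0])
    have "S \<noteq> \<infinity>" using assms(5) B Nq by (auto simp: enn_root_def)
    then obtain s where s: "S = ennreal s" "0 \<le> s" by (cases S) auto
    have termq: "morrey_norm q \<phi> w (indicator B) * kothe_norm (morrey_norm q \<phi> w) (indicator B) / emeasure lborel B \<le> ennreal a"
      unfolding a(1)[symmetric] A_const_def using B by (intro SUP_upper)
    show "morrey_norm p \<phi> w (indicator B) * kothe_norm (morrey_norm p \<phi> w) (indicator B) / emeasure lborel B \<le> ennreal (a powr r)"
    proof (cases "s = 0")
      case True
      then have "morrey_norm p \<phi> w (indicator B) = 0" using Np s p0 by (simp add: enn_root_def)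
      then show ?thesis by simp
    next
      case False
      then have sp: "0 < s" using s by simp
      have Nq': "morrey_norm q \<phi> w (indicator B) = ennreal (s powr (1/q))"
        using Nq s by (simp add: enn_root_def)
      have Np': "morrey_norm p \<phi> w (indicator B) = ennreal (s powr (1/p))"
        using Np s by (simp add: enn_root_def)
      have Kfin: "kothe_norm (morrey_norm q \<phi> w) (indicator B) \<noteq> \<infinity>"
      proof
        assume "kothe_norm (morrey_norm q \<phi> w) (indicator B) = \<infinity>"
        then have "morrey_norm q \<phi> w (indicator B) * kothe_norm (morrey_norm q \<phi> w) (indicator B) / emeasure lborel B = \<infinity>"
          using Nq' sp mB by (simp add: ennreal_mult_eq_top_iff ennreal_divide_eq_top_iff)
        then show False using termq by (simp add: top_unique)
      qed
      then obtain k where k: "kothe_norm (morrey_norm q \<phi> w) (indicator B) = ennreal k" "0 \<le> k"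
        by (cases "kothe_norm (morrey_norm q \<phi> w) (indicator B)") auto
      have e1: "ennreal (s powr (1/q)) * ennreal k / ennreal m = ennreal (s powr (1/q) * k / m)"
      proof -
        have "ennreal (s powr (1/q)) * ennreal k = ennreal (s powr (1/q) * k)"
          using k(2) by (intro ennreal_mult[symmetric]) auto
        then show ?thesis using m0 k(2) by (simp add: divide_ennreal)
      qed
      have "ennreal (s powr (1/q) * k / m) \<le> ennreal a"
        using termq unfolding Nq' k(1) mB e1 .
      then have ska: "s powr (1/q) * k / m \<le> a" using a(2) by simp
      have Kp: "kothe_norm (morrey_norm p \<phi> w) (indicator B) \<le> ennreal (k powr r * m powr (1 - r))"
        using dual_bound[OF w q0 assms(4) Bs mBl m0 k] by (simp add: r_def)
      have "morrey_norm p \<phi> w (indicator B) * kothe_norm (morrey_norm p \<phi> w) (indicator B) / emeasure lborel B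
          \<le> ennreal (s powr (1/p)) * ennreal (k powr r * m powr (1 - r)) / ennreal m"
        unfolding Np' mB by (intro divide_right_mono_ennreal mult_left_mono Kp) auto
      also have "\<dots> = ennreal (s powr (1/p) * (k powr r * m powr (1 - r)) / m)"
      proof -
        have "ennreal (s powr (1/p)) * ennreal (k powr r * m powr (1 - r)) = ennreal (s powr (1/p) * (k powr r * m powr (1 - r)))"
          by (intro ennreal_mult[symmetric]) auto
        then show ?thesis using m0 by (simp add: divide_ennreal)
      qed
      also have "s powr (1/p) * (k powr r * m powr (1 - r)) / m = (s powr (1/q) * k / m) powr r"
        by (rule alg2[OF r_def q0 assms(4) k(2) m0 s(2)])
      also have "ennreal ((s powr (1/q) * k / m) powr r) \<le> ennreal (a powr r)"
        using ska k(2) m0 r by (intro ennreal_leI powr_mono2) auto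
      finally show ?thesis .
    qed
  qed
  then show ?thesis by (rule le_less_trans) simp
qed

end
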